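(* Let $V$ be a nonempty finite subset of $\mathbb{R}^n$ and $W$ a nonempty finite subset of $\mathbb{R}^n\setminus\{0\}$. Let $L=\operatorname{conv}(V)+\operatorname{cone}(W)$ and $f\in\operatorname{int}(L)$. For $t\in\mathbb{N}$ let $L_t=\operatorname{conv}(V\cup(f+tW))$. Then $f\in\operatorname{int}(L_t)$ for every $t\in\mathbb{N}$, the sequence $(L_t)_{t=1}^\infty$ is increasing with respect to inclusion, and $d_f(L_t,L)\to0$ as $t\to\infty$.
   Context: For $X\subseteq\mathbb{R}^n$, the polar is $X^\circ=\{r\in\mathbb{R}^n:r\cdot x\le1\ \forall x\in X\}$. For closed convex sets $B_1,B_2\subseteq\mathbb{R}^n$ containing $f$ in their interiors, $d_f(B_1,B_2)=d_H((B_1-f)^\circ,(B_2-f)^\circ)$, where $d_H$ is the Hausdorff metric on nonempty compact sets. *)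

theory Defs
  imports "HOL-Analysis.Analysis"
begin

definition polar :: "'a::euclidean_space set \<Rightarrow> 'a set" where
  "polar X = {r. \<forall>x\<in>X. r \<bullet> x \<le> 1}"

text \<open>Hausdorff distance (intended for nonempty compact sets).\<close>
definition hausdorff_dist :: "'a::metric_space set \<Rightarrow> 'a set \<Rightarrow> real" where
  "hausdorff_dist A B = max (SUP x\<in>A. infdist x B) (SUP y\<in>B. infdist y A)"

definition polar_dist :: "'a::euclidean_space \<Rightarrow> 'a set \<Rightarrow> 'a set \<Rightarrow> real" where
  "polar_dist f B1 B2 =
     hausdorff_dist (polar ((\<lambda>x. x - f) ` B1)) (polar ((\<lambda>x. x - f) ` B2))"

definition conic_comb :: "'a::real_vector set \<Rightarrow> 'a set" where
  "conic_comb W = {x. \<exists>c. (\<forall>w\<in>W. 0 \<le> c w) \<and> x = (\<Sum>w\<in>W. c w *\<^sub>R w)}"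

end

theory Submission
  imports Defs
begin

lemma key_comb:
  fixes V W :: "'a::euclidean_space set" and f v v0 :: 'a
  assumes fin: "finite W"
    and v: "v \<in> convex hull V" and v0: "v0 \<in> convex hull V"
    and c: "\<forall>w\<in>W. 0 \<le> c w" and c0: "\<forall>w\<in>W. 0 \<le> c0 w"
    and f: "f = v0 + (\<Sum>w\<in>W. c0 w *\<^sub>R w)"
    and l: "0 < l" "l \<le> 1" and t: "t > 0"
    and cond: "l * sum c W \<le> (1 - l) * t"
  shows "l *\<^sub>R (v + (\<Sum>w\<in>W. c w *\<^sub>R w)) + (1 - l) *\<^sub>R f
         \<in> convex hull (V \<union> (\<lambda>w. f + t *\<^sub>R w) ` W)"
proof -
  let ?H = "convex hull (V \<union> (\<lambda>w. f + t *\<^sub>R w) ` W)"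
  have cH: "convex ?H" by simp
  have VH: "convex hull V \<subseteq> ?H" by (simp add: hull_mono)
  define C0 where "C0 = sum c0 W"
  define C where "C = sum c W"
  define S where "S = (1 - l) * C0 + l * C"
  have C0: "C0 \<ge> 0" using c0 by (simp add: C0_def sum_nonneg)
  have C: "C \<ge> 0" using c by (simp add: C_def sum_nonneg)
  have S0: "S \<ge> 0" using C0 C l by (simp add: S_def)
  define th where "th = S / (t + C0)"
  have th0: "th \<ge> 0" using S0 C0 t by (simp add: th_def)
  have thl: "th \<le> 1 - l"
  proof -
    have "S \<le> (1 - l) * (t + C0)" using cond by (simp add: S_def C_def algebra_simps)
    thus ?thesis using t C0 by (simp add: th_def divide_le_eq)
  qed
  define d where "d w = (1 - l - th) * c0 w + l * c w" for w
  have d0: "\<forall>w\<in>W. 0 \<le> d w" using c c0 thl l by (simp add: d_def)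
  have "sum d W = (1 - l - th) * sum c0 W + l * sum c W"
    unfolding d_def by (simp add: sum.distrib sum_distrib_left)
  hence sumd: "sum d W = S - th * C0"
    by (simp add: C0_def C_def S_def algebra_simps)
  have pt: "l *\<^sub>R (v + (\<Sum>w\<in>W. c w *\<^sub>R w)) + (1 - l) *\<^sub>R f
      = (l *\<^sub>R v + (1 - l - th) *\<^sub>R v0) + th *\<^sub>R f + (\<Sum>w\<in>W. d w *\<^sub>R w)"
  proof -
    have sd: "(\<Sum>w\<in>W. d w *\<^sub>R w) = (1-l-th) *\<^sub>R (\<Sum>w\<in>W. c0 w *\<^sub>R w) + l *\<^sub>R (\<Sum>w\<in>W. c w *\<^sub>R w)"
      unfolding d_def by (simp add: scaleR_add_left sum.distrib scaleR_sum_right)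
    show ?thesis by (simp add: sd f algebra_simps)
  qed
  show ?thesis
  proof (cases "S = 0")
    case True
    hence th: "th = 0" by (simp add: th_def)
    have "sum d W = 0" using sumd True th by simp
    hence "\<forall>w\<in>W. d w = 0" using sum_nonneg_eq_0_iff[OF fin] d0 by blast
    hence "(\<Sum>w\<in>W. d w *\<^sub>R w) = 0" by simp
    hence "l *\<^sub>R (v + (\<Sum>w\<in>W. c w *\<^sub>R w)) + (1 - l) *\<^sub>R f = l *\<^sub>R v + (1 - l) *\<^sub>R v0"
      using pt th by simp
    moreover have "l *\<^sub>R v + (1 - l) *\<^sub>R v0 \<in> convex hull V"
      using v v0 l by (intro convexD) auto
    ultimately show ?thesis using VH by auto
  next
    case False
    hence Sp: "S > 0" using S0 by simp
    hence thp: "th > 0" using C0 t by (simp add: th_def)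
    have th1: "th < 1" using thl l by simp
    define a where "a = ((l / (1 - th)) *\<^sub>R v + ((1 - l - th) / (1 - th)) *\<^sub>R v0)"
    have a: "a \<in> convex hull V"
    proof -
      have "l / (1 - th) + (1 - l - th) / (1 - th) = 1" using th1 by (simp add: add_divide_distrib[symmetric])
      moreover have "0 \<le> l / (1 - th)" "0 \<le> (1 - l - th) / (1 - th)" using l thl th1 by auto
      ultimately show ?thesis unfolding a_def using v v0 by (intro convexD) auto
    qed
    define m where "m = (\<Sum>w\<in>W. (d w / (th * t)) *\<^sub>R w)"
    have "sum (\<lambda>w. d w / (th * t)) W = 1"
    proof -
      have S_eq: "S = th * (t + C0)" using t C0 by (simp add: th_def)
      have "sum d W = th * t" using sumd S_eq by (simp add: algebra_simps)
      thus ?thesis using thp t by (simp add: sum_divide_distrib[symmetric])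
    qed
    hence m: "m \<in> convex hull W"
      unfolding convex_hull_finite[OF fin] m_def using d0 thp t
      by (intro CollectI exI[of _ "\<lambda>w. d w / (th * t)"]) auto
    have "f + t *\<^sub>R m \<in> (\<lambda>x. f + t *\<^sub>R x) ` (convex hull W)" using m by blast
    hence "f + t *\<^sub>R m \<in> convex hull ((\<lambda>x. f + t *\<^sub>R x) ` W)"
      by (simp add: convex_hull_affinity)
    hence b: "f + t *\<^sub>R m \<in> ?H" by (meson hull_mono subsetD sup_ge2)
    have "(1 - th) *\<^sub>R a + th *\<^sub>R (f + t *\<^sub>R m) \<in> ?H"
      using a VH b thp th1 by (intro convexD[OF cH]) auto
    moreover have "(1 - th) *\<^sub>R a + th *\<^sub>R (f + t *\<^sub>R m)
       = l *\<^sub>R (v + (\<Sum>w\<in>W. c w *\<^sub>R w)) + (1 - l) *\<^sub>R f"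
    proof -
      have "(1 - th) *\<^sub>R a = l *\<^sub>R v + (1 - l - th) *\<^sub>R v0"
        using th1 by (simp add: a_def scaleR_add_right)
      moreover have "th *\<^sub>R (t *\<^sub>R m) = (\<Sum>w\<in>W. d w *\<^sub>R w)"
        using thp t by (simp add: m_def scaleR_sum_right)
      ultimately have "(1 - th) *\<^sub>R a + th *\<^sub>R (f + t *\<^sub>R m)
         = (l *\<^sub>R v + (1 - l - th) *\<^sub>R v0) + th *\<^sub>R f + (\<Sum>w\<in>W. d w *\<^sub>R w)"
        by (simp only: scaleR_add_right) (simp add: algebra_simps)
      thus ?thesis using pt by simp
    qed
    ultimately show ?thesis by simp
  qed
qed

lemma polar_closed: "closed (polar (X::'a::euclidean_space set))"
proof -
  have "polar X = (\<Inter>x\<in>X. {r. inner x r \<le> 1})"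
    by (auto simp: polar_def inner_commute)
  thus ?thesis by (simp add: closed_INT closed_halfspace_le)
qed

lemma polar_zero: "0 \<in> polar X"
  by (simp add: polar_def)

lemma polar_antimono: "X \<subseteq> Y \<Longrightarrow> polar Y \<subseteq> polar X"
  by (auto simp: polar_def)

lemma polar_bounded:
  fixes X :: "'a::euclidean_space set"
  assumes e: "e > 0" and b: "ball 0 e \<subseteq> X"
  shows "polar X \<subseteq> cball 0 (2 / e)"
proof
  fix r assume r: "r \<in> polar X"
  show "r \<in> cball 0 (2 / e)"
  proof (cases "r = 0")
    case True thus ?thesis using e by simp
  next
    case False
    hence nr: "norm r > 0" by simp
    define x where "x = (e / 2 / norm r) *\<^sub>R r"
    have "norm x = e / 2" using nr e by (simp add: x_def)
    hence "x \<in> X" using b e by auto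
    hence "r \<bullet> x \<le> 1" using r by (simp add: polar_def)
    moreover have "r \<bullet> x = e / 2 * norm r"
      using nr by (simp add: x_def power2_norm_eq_inner[symmetric] power2_eq_square)
    ultimately have "norm r \<le> 2 / e" using e by (simp add: field_simps)
    thus ?thesis by simp
  qed
qed

lemma hausdorff_nest:
  fixes P :: "nat \<Rightarrow> 'a::euclidean_space set" and Q :: "'a set"
  assumes closedP: "\<And>t. closed (P t)" and bnd: "bounded (P 1)"
    and mono: "\<And>s t. 1 \<le> s \<Longrightarrow> s \<le> t \<Longrightarrow> P t \<subseteq> P s"
    and sub: "\<And>t. 1 \<le> t \<Longrightarrow> Q \<subseteq> P t"
    and Qne: "Q \<noteq> {}"
    and inter: "\<And>x. (\<forall>t\<ge>1. x \<in> P t) \<Longrightarrow> x \<in> Q"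
  shows "(\<lambda>t. hausdorff_dist (P t) Q) \<longlonglongrightarrow> 0"
proof (rule LIMSEQ_I)
  fix e :: real assume e: "e > 0"
  have "\<exists>T\<ge>1. \<forall>x\<in>P T. infdist x Q < e / 2"
  proof (rule ccontr)
    assume "\<not> ?thesis"
    hence H: "\<And>T. T \<ge> 1 \<Longrightarrow> \<exists>x\<in>P T. e / 2 \<le> infdist x Q" by (meson not_less)
    define F where "F n = {x \<in> P (Suc n). e / 2 \<le> infdist x Q}" for n
    have "\<Inter>(range F) \<noteq> {}"
    proof (rule compact_nest)
      fix n
      have "closed {x. e / 2 \<le> infdist x Q}"
        by (intro closed_Collect_le continuous_intros continuous_on_infdist) auto
      hence "closed (F n)" unfolding F_def using closedP
        by (simp add: Collect_conj_eq closed_Int Int_def[symmetric] Int_commute)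
      moreover have "bounded (F n)"
        using mono[of 1 "Suc n"] bnd unfolding F_def by (auto intro: bounded_subset)
      ultimately show "compact (F n)" by (simp add: compact_eq_bounded_closed)
      show "F n \<noteq> {}" using H[of "Suc n"] unfolding F_def by auto
    next
      fix m n :: nat assume "m \<le> n"
      thus "F n \<subseteq> F m" using mono[of "Suc m" "Suc n"] unfolding F_def by auto
    qed
    then obtain x where x: "\<And>n. x \<in> F n" by blast
    have "\<forall>t\<ge>1. x \<in> P t"
    proof (intro allI impI)
      fix t :: nat assume "1 \<le> t"
      then obtain n where "t = Suc n" by (cases t) auto
      thus "x \<in> P t" using x[of n] unfolding F_def by auto
    qed
    hence "x \<in> Q" by (rule inter)
    hence "infdist x Q = 0" by (rule infdist_zero)
    moreover have "e / 2 \<le> infdist x Q" using x[of 0] unfolding F_def by auto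
    ultimately show False using e by simp
  qed
  then obtain T where T: "T \<ge> 1" "\<forall>x\<in>P T. infdist x Q < e / 2" by blast
  show "\<exists>no. \<forall>n\<ge>no. norm (hausdorff_dist (P n) Q - 0) < e"
  proof (intro exI allI impI)
    fix n assume n: "T \<le> n"
    have PnQ: "Q \<subseteq> P n" using sub[of n] n T by simp
    hence Pne: "P n \<noteq> {}" using Qne by auto
    have s1: "(SUP x\<in>P n. infdist x Q) \<le> e / 2"
    proof (rule cSUP_least[OF Pne])
      fix x assume "x \<in> P n"
      hence "x \<in> P T" using mono[of T n] n T by auto
      thus "infdist x Q \<le> e / 2" using T by fastforce
    qed
    have "(SUP y\<in>Q. infdist y (P n)) = (SUP y\<in>Q. 0::real)"
      using PnQ by (intro SUP_cong) (auto intro: infdist_zero)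
    also have "\<dots> = 0" using Qne by simp
    finally have s2: "(SUP y\<in>Q. infdist y (P n)) = 0" .
    show "norm (hausdorff_dist (P n) Q - 0) < e"
      unfolding hausdorff_dist_def s2 using s1 e by auto
  qed
qed


lemma cube_mem: "(b::'a::euclidean_space) \<in> Basis \<Longrightarrow> (\<Sum>i\<in>Basis. d *\<^sub>R i) \<bullet> b = d"
  by (simp add: inner_sum_left inner_Basis if_distrib[of "\<lambda>x. d * x"] sum.delta cong: if_cong)

lemma cube_iff:
  "(y::'a::euclidean_space) \<in> cbox (f - (\<Sum>i\<in>Basis. d *\<^sub>R i)) (f + (\<Sum>i\<in>Basis. d *\<^sub>R i))
    \<longleftrightarrow> (\<forall>b\<in>Basis. \<bar>(y - f) \<bullet> b\<bar> \<le> d)"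
  unfolding mem_box by (auto simp: cube_mem inner_diff_left inner_add_left abs_le_iff)

lemma le_one_from_scaled:
  fixes a :: real
  assumes "\<And>l. 0 < l \<Longrightarrow> l < 1 \<Longrightarrow> l * a \<le> 1"
  shows "a \<le> 1"
proof (rule ccontr)
  assume "\<not> a \<le> 1"
  hence a: "a > 1" by simp
  define l where "l = (a + 1) / (2 * a)"
  have "0 < l" "l < 1" using a by (auto simp: l_def field_simps)
  hence "l * a \<le> 1" by (rule assms)
  moreover have "l * a = (a + 1) / 2" using a by (simp add: l_def field_simps)
  ultimately show False using a by simp
qed

theorem lemma4p1:
  fixes V W :: "'a::euclidean_space set" and f :: 'a
    and L :: "'a set" and Lt :: "nat \<Rightarrow> 'a set"
  assumes "finite V" "V \<noteq> {}"
    and "finite W" "W \<noteq> {}" "0 \<notin> W"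
    and L_def: "L = {v + w | v w. v \<in> convex hull V \<and> w \<in> conic_comb W}"
    and f_int: "f \<in> interior L"
    and Lt_def: "\<And>t. Lt t = convex hull (V \<union> (\<lambda>w. f + real t *\<^sub>R w) ` W)"
  shows "(\<forall>t\<ge>1. f \<in> interior (Lt t))
       \<and> (\<forall>t\<ge>1. Lt t \<subseteq> Lt (Suc t))
       \<and> ((\<lambda>t. polar_dist f (Lt t) L) \<longlonglongrightarrow> 0)"
proof -
  have finW: "finite W" by fact
  have memL: "\<And>v c. v \<in> convex hull V \<Longrightarrow> \<forall>w\<in>W. 0 \<le> c w \<Longrightarrow> v + (\<Sum>w\<in>W. c w *\<^sub>R w) \<in> L"
    unfolding L_def conic_comb_def by blast
  have Lrep: "\<And>z. z \<in> L \<Longrightarrow> \<exists>v c. v \<in> convex hull V \<and> (\<forall>w\<in>W. 0 \<le> c w) \<and> z = v + (\<Sum>w\<in>W. c w *\<^sub>R w)"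
    unfolding L_def conic_comb_def by blast
  have ccv: "convex (conic_comb W)"
    unfolding convex_def
  proof (intro allI impI ballI)
    fix x y :: 'a and u v :: real
    assume x: "x \<in> conic_comb W" and y: "y \<in> conic_comb W" and uv: "0 \<le> u" "0 \<le> v" "u + v = 1"
    from x have "\<exists>c. (\<forall>w\<in>W. 0 \<le> c w) \<and> x = (\<Sum>w\<in>W. c w *\<^sub>R w)" unfolding conic_comb_def by simp
    then obtain c where c: "\<forall>w\<in>W. 0 \<le> c w" "x = (\<Sum>w\<in>W. c w *\<^sub>R w)" by blast
    from y have "\<exists>c. (\<forall>w\<in>W. 0 \<le> c w) \<and> y = (\<Sum>w\<in>W. c w *\<^sub>R w)" unfolding conic_comb_def by simp
    then obtain d where d: "\<forall>w\<in>W. 0 \<le> d w" "y = (\<Sum>w\<in>W. d w *\<^sub>R w)" by blast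
    have "(\<Sum>w\<in>W. (u * c w + v * d w) *\<^sub>R w) = u *\<^sub>R (\<Sum>w\<in>W. c w *\<^sub>R w) + v *\<^sub>R (\<Sum>w\<in>W. d w *\<^sub>R w)"
      by (simp add: scaleR_add_left sum.distrib scaleR_sum_right)
    hence "u *\<^sub>R x + v *\<^sub>R y = (\<Sum>w\<in>W. (u * c w + v * d w) *\<^sub>R w)"
      using c(2) d(2) by simp
    moreover have "\<forall>w\<in>W. 0 \<le> u * c w + v * d w" using c(1) d(1) uv by (auto intro!: add_nonneg_nonneg mult_nonneg_nonneg)
    ultimately show "u *\<^sub>R x + v *\<^sub>R y \<in> conic_comb W" unfolding conic_comb_def
      by (intro CollectI exI[of _ "\<lambda>w. u * c w + v * d w"]) simp
  qed
  have "L = convex hull V + conic_comb W"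
  proof (intro set_eqI iffI)
    fix x assume "x \<in> L"
    then obtain v w where "x = v + w" "v \<in> convex hull V" "w \<in> conic_comb W" unfolding L_def by blast
    thus "x \<in> convex hull V + conic_comb W" by (simp add: set_plus_intro)
  next
    fix x assume "x \<in> convex hull V + conic_comb W"
    then obtain v w where "x = v + w" "v \<in> convex hull V" "w \<in> conic_comb W" by (rule set_plus_elim)
    thus "x \<in> L" unfolding L_def by blast
  qed
  hence Lconv: "convex L" using ccv by (simp add: convex_set_plus)
  obtain v0 c0 where v0: "v0 \<in> convex hull V" and c0: "\<forall>w\<in>W. 0 \<le> c0 w"
    and f: "f = v0 + (\<Sum>w\<in>W. c0 w *\<^sub>R w)"
    using Lrep[of f] f_int interior_subset[of L] by (meson subsetD)
  have LtL: "Lt t \<subseteq> L" for t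
    unfolding Lt_def
  proof (rule hull_minimal)
    show "convex L" by (rule Lconv)
    have "V \<subseteq> L"
    proof
      fix v assume "v \<in> V"
      hence "v + (\<Sum>w\<in>W. 0 *\<^sub>R w) \<in> L" by (intro memL hull_inc) auto
      thus "v \<in> L" by simp
    qed
    moreover have "f + real t *\<^sub>R w \<in> L" if w: "w \<in> W" for w
    proof -
      define c' where "c' u = c0 u + (if u = w then real t else 0)" for u
      have e1: "c' u *\<^sub>R u = c0 u *\<^sub>R u + (if u = w then real t *\<^sub>R u else 0)" for u
        by (simp add: c'_def scaleR_add_left)
      have "(\<Sum>u\<in>W. c' u *\<^sub>R u) = (\<Sum>u\<in>W. c0 u *\<^sub>R u) + (\<Sum>u\<in>W. (if u = w then real t *\<^sub>R u else 0))"
        unfolding e1 by (rule sum.distrib)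
      also have "(\<Sum>u\<in>W. (if u = w then real t *\<^sub>R u else 0)) = real t *\<^sub>R w"
        using w finW by (simp add: sum.delta)
      finally have "(\<Sum>u\<in>W. c' u *\<^sub>R u) = (\<Sum>u\<in>W. c0 u *\<^sub>R u) + real t *\<^sub>R w" .
      hence "f + real t *\<^sub>R w = v0 + (\<Sum>u\<in>W. c' u *\<^sub>R u)" using f by simp
      moreover have "\<forall>u\<in>W. 0 \<le> c' u" using c0 by (simp add: c'_def)
      ultimately show ?thesis using memL v0 by simp
    qed
    ultimately show "V \<union> (\<lambda>w. f + real t *\<^sub>R w) ` W \<subseteq> L" by auto
  qed
  have keyL: "l *\<^sub>R (v + (\<Sum>w\<in>W. c w *\<^sub>R w)) + (1 - l) *\<^sub>R f \<in> Lt t"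
    if "v \<in> convex hull V" "\<forall>w\<in>W. 0 \<le> c w" "0 < l" "l \<le> 1" "t > 0"
       "l * sum c W \<le> (1 - l) * real t" for v c l t
    unfolding Lt_def using that
    by (intro key_comb[OF finW _ v0 _ c0 f]) auto
  have convLt: "convex (Lt t)" for t by (simp add: Lt_def)
  have intr: "f \<in> interior (Lt t)" if t: "t \<ge> 1" for t
  proof -
    obtain r where r: "r > 0" "ball f r \<subseteq> L" using f_int mem_interior by blast
    define D where "D = real DIM('a)"
    define d where "d = r / (D + 1)"
    have D0: "D \<ge> 0" by (simp add: D_def)
    have d0: "d > 0" using r D0 by (simp add: d_def)
    let ?cube = "cbox (f - (\<Sum>i\<in>Basis. d *\<^sub>R i)) (f + (\<Sum>i\<in>Basis. d *\<^sub>R i))"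
    obtain S where S: "finite S" "?cube = convex hull S" using cube_convex_hull[OF d0] by blast
    have incube: "y \<in> ?cube" if "\<forall>b\<in>Basis. \<bar>(y - f) \<bullet> b\<bar> \<le> d" for y
      using that cube_iff by blast
    have cubeball: "?cube \<subseteq> ball f r"
    proof
      fix s assume s: "s \<in> ?cube"
      have "\<forall>b\<in>Basis. \<bar>(s - f) \<bullet> b\<bar> \<le> d"
        using s cube_iff by blast
      hence "norm (s - f) \<le> (\<Sum>b\<in>(Basis::'a set). d)"
      proof -
        have "(\<Sum>b\<in>(Basis::'a set). \<bar>(s - f) \<bullet> b\<bar>) \<le> (\<Sum>b\<in>(Basis::'a set). d)"
          using \<open>\<forall>b\<in>Basis. \<bar>(s - f) \<bullet> b\<bar> \<le> d\<close> by (intro sum_mono) auto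
        thus ?thesis using norm_le_l1[of "s - f"] by linarith
      qed
      also have "\<dots> = D * d" by (simp add: D_def)
      also have "\<dots> < r" using r D0 by (simp add: d_def field_simps)
      finally show "s \<in> ball f r" by (simp add: dist_norm norm_minus_commute)
    qed
    have SL: "S \<subseteq> L" using S(2) cubeball r(2) hull_subset[of S convex] by auto
    have "\<forall>s\<in>S. \<exists>v c. v \<in> convex hull V \<and> (\<forall>w\<in>W. 0 \<le> c w) \<and> s = v + (\<Sum>w\<in>W. c w *\<^sub>R w)"
      using SL Lrep by blast
    then obtain vs where "\<forall>s\<in>S. \<exists>c. vs s \<in> convex hull V \<and> (\<forall>w\<in>W. 0 \<le> c w) \<and> s = vs s + (\<Sum>w\<in>W. c w *\<^sub>R w)"
      by (rule bchoice[elim_format]) blast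
    then obtain cs where rep: "\<forall>s\<in>S. vs s \<in> convex hull V \<and> (\<forall>w\<in>W. 0 \<le> cs s w) \<and> s = vs s + (\<Sum>w\<in>W. cs s w *\<^sub>R w)"
      by (rule bchoice[elim_format]) blast
    define M where "M = (\<Sum>s\<in>S. sum (cs s) W)"
    have Cnn: "sum (cs s) W \<ge> 0" if "s \<in> S" for s using rep that by (simp add: sum_nonneg)
    have CM: "sum (cs s) W \<le> M" if "s \<in> S" for s
      unfolding M_def using that Cnn S(1) by (intro member_le_sum) auto
    have M0: "M \<ge> 0" unfolding M_def using Cnn by (simp add: sum_nonneg)
    define l where "l = 1 / (M + 1)"
    have l: "0 < l" "l \<le> 1" using M0 by (auto simp: l_def)
    define h where "h x = (1 - l) *\<^sub>R f + l *\<^sub>R x" for x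
    have hS: "h ` S \<subseteq> Lt t"
    proof
      fix y assume "y \<in> h ` S"
      then obtain s where s: "s \<in> S" "y = h s" by blast
      have "l * sum (cs s) W \<le> l * M" using CM[OF s(1)] l by simp
      also have "\<dots> = 1 - l" using M0 by (simp add: l_def field_simps)
      also have "\<dots> \<le> (1 - l) * real t" using t l mult_left_mono[of 1 "real t" "1 - l"] by simp
      finally have "l *\<^sub>R (vs s + (\<Sum>w\<in>W. cs s w *\<^sub>R w)) + (1 - l) *\<^sub>R f \<in> Lt t"
        using rep s(1) l t by (intro keyL) auto
      thus "y \<in> Lt t" using rep s by (simp add: h_def add.commute)
    qed
    have "convex hull (h ` S) \<subseteq> Lt t" by (rule hull_minimal[where S=convex, OF hS convLt[of t]])
    moreover have "convex hull (h ` S) = h ` ?cube"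
      unfolding S(2) h_def by (rule convex_hull_affinity)
    ultimately have hcube: "h ` ?cube \<subseteq> Lt t" by simp
    have "ball f (l * d) \<subseteq> h ` ?cube"
    proof
      fix y assume y: "y \<in> ball f (l * d)"
      define s where "s = f + (1 / l) *\<^sub>R (y - f)"
      have "l *\<^sub>R s = l *\<^sub>R f + (y - f)" using l by (simp add: s_def scaleR_add_right)
      hence hs: "h s = y" by (simp add: h_def algebra_simps)
      have n1: "norm (s - f) = norm (y - f) / l" using l by (simp add: s_def)
      have "norm (y - f) < l * d" using y norm_minus_commute[of f y] by (simp add: dist_norm)
      hence "norm (y - f) / l < d" using l by (simp add: pos_divide_less_eq mult.commute)
      hence nd: "norm (s - f) < d" using n1 by simp
      have "\<forall>b\<in>Basis. \<bar>(s - f) \<bullet> b\<bar> \<le> d"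
      proof
        fix b :: 'a assume "b \<in> Basis"
        hence "\<bar>(s - f) \<bullet> b\<bar> \<le> norm (s - f)" by (rule Basis_le_norm)
        thus "\<bar>(s - f) \<bullet> b\<bar> \<le> d" using nd by linarith
      qed
      hence "s \<in> ?cube" by (rule incube)
      thus "y \<in> h ` ?cube" using hs by blast
    qed
    hence "ball f (l * d) \<subseteq> Lt t" using hcube by auto
    moreover have "l * d > 0" using l d0 by simp
    ultimately show ?thesis unfolding mem_interior by blast
  qed
  have monoS: "Lt t \<subseteq> Lt (Suc t)" if t: "t \<ge> 1" for t
    unfolding Lt_def[of t]
  proof (rule hull_minimal)
    show "convex (Lt (Suc t))" by (rule convLt)
    have fin: "f \<in> Lt (Suc t)" using intr[of "Suc t"] interior_subset by auto
    have "V \<subseteq> Lt (Suc t)" unfolding Lt_def by (auto intro: hull_inc)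
    moreover have "f + real t *\<^sub>R w \<in> Lt (Suc t)" if w: "w \<in> W" for w
    proof -
      have b: "f + real (Suc t) *\<^sub>R w \<in> Lt (Suc t)"
        unfolding Lt_def using w by (auto intro: hull_inc)
      define u where "u = real t / real (Suc t)"
      have u: "0 \<le> u" "u \<le> 1" by (auto simp: u_def)
      have "(1 - u) *\<^sub>R f + u *\<^sub>R (f + real (Suc t) *\<^sub>R w) \<in> Lt (Suc t)"
        using fin b u by (intro convexD[OF convLt]) auto
      moreover have "(1 - u) *\<^sub>R f + u *\<^sub>R (f + real (Suc t) *\<^sub>R w) = f + real t *\<^sub>R w"
      proof -
        have e: "u * real (Suc t) = real t" by (simp add: u_def)
        have "(1 - u) *\<^sub>R f + u *\<^sub>R (f + real (Suc t) *\<^sub>R w) = f + (u * real (Suc t)) *\<^sub>R w"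
          by (simp add: scaleR_add_right algebra_simps)
        thus ?thesis using e by simp
      qed
      ultimately show ?thesis by simp
    qed
    ultimately show "V \<union> (\<lambda>w. f + real t *\<^sub>R w) ` W \<subseteq> Lt (Suc t)" by auto
  qed
  have monoG: "Lt s \<subseteq> Lt t" if "1 \<le> s" "s \<le> t" for s t
    using that(2)
  proof (induction t rule: dec_induct)
    case base thus ?case by simp
  next
    case (step n) thus ?case using monoS[of n] that(1) by auto
  qed
  have lim: "(\<lambda>t. polar_dist f (Lt t) L) \<longlonglongrightarrow> 0"
    unfolding polar_dist_def
  proof (rule hausdorff_nest)
    show "closed (polar ((\<lambda>x. x - f) ` Lt t))" for t by (rule polar_closed)
    have "f \<in> interior (Lt 1)" using intr[of 1] by simp
    then obtain e where e: "e > 0" "ball f e \<subseteq> Lt 1" unfolding mem_interior by blast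
    have "ball 0 e \<subseteq> (\<lambda>x. x - f) ` Lt 1"
    proof
      fix y :: 'a assume "y \<in> ball 0 e"
      hence "y + f \<in> ball f e" by (simp add: dist_norm)
      hence "y + f \<in> Lt 1" using e by auto
      thus "y \<in> (\<lambda>x. x - f) ` Lt 1" by (auto intro: image_eqI[of _ _ "y + f"])
    qed
    hence "polar ((\<lambda>x. x - f) ` Lt 1) \<subseteq> cball 0 (2 / e)" using e by (intro polar_bounded)
    thus "bounded (polar ((\<lambda>x. x - f) ` Lt 1))" by (rule bounded_subset[OF bounded_cball])
    show "polar ((\<lambda>x. x - f) ` Lt t) \<subseteq> polar ((\<lambda>x. x - f) ` Lt s)" if "1 \<le> s" "s \<le> t" for s t
      using monoG[OF that] by (intro polar_antimono image_mono)
    show "polar ((\<lambda>x. x - f) ` L) \<subseteq> polar ((\<lambda>x. x - f) ` Lt t)" for t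
      using LtL by (intro polar_antimono image_mono)
    show "polar ((\<lambda>x. x - f) ` L) \<noteq> {}" using polar_zero by blast
    fix x assume x: "\<forall>t\<ge>1. x \<in> polar ((\<lambda>x. x - f) ` Lt t)"
    show "x \<in> polar ((\<lambda>x. x - f) ` L)"
      unfolding polar_def
    proof (intro CollectI ballI)
      fix y assume "y \<in> (\<lambda>x. x - f) ` L"
      then obtain z where z: "z \<in> L" "y = z - f" by blast
      obtain v c where vc: "v \<in> convex hull V" "\<forall>w\<in>W. 0 \<le> c w" "z = v + (\<Sum>w\<in>W. c w *\<^sub>R w)"
        using Lrep[OF z(1)] by blast
      show "x \<bullet> y \<le> 1"
        unfolding z(2)
      proof (rule le_one_from_scaled)
        fix l :: real assume l: "0 < l" "l < 1"
        define t where "t = nat \<lceil>l * sum c W / (1 - l)\<rceil> + 1"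
        have t1: "t \<ge> 1" by (simp add: t_def)
        have "l * sum c W / (1 - l) \<le> real t" unfolding t_def by linarith
        hence cond: "l * sum c W \<le> (1 - l) * real t" using l by (simp add: field_simps)
        have "l *\<^sub>R z + (1 - l) *\<^sub>R f \<in> Lt t"
          unfolding vc(3) using vc l t1 cond by (intro keyL) auto
        hence "x \<bullet> ((l *\<^sub>R z + (1 - l) *\<^sub>R f) - f) \<le> 1"
          using x t1 unfolding polar_def by blast
        moreover have "(l *\<^sub>R z + (1 - l) *\<^sub>R f) - f = l *\<^sub>R (z - f)" by (simp add: algebra_simps)
        ultimately show "l * (x \<bullet> (z - f)) \<le> 1" by simp
      qed
    qed
  qed
  show ?thesis using intr monoS lim by blast
qed

end
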